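(* Let $\partial:G_1\to G_0$ be a crossed module. Then there is an exact sequence of groups $$1\to \mathrm{Der}(\pi_0(\mathbf G_* ),\pi_1(\mathbf G_* ))\to \mathbf Z_0(\mathbf G_* )\xrightarrow{\mathsf z_0} G_0,$$ where the first map sends a crossed homomorphism $\phi$ to $(1,\tilde\phi)$, with $\tilde\phi$ the composite $G_0\to\pi_0(\mathbf G_* )\xrightarrow{\phi}\pi_1(\mathbf G_* )\hookrightarrow G_1$, and $\mathsf z_0(x,\xi)=x$.
   Context: A crossed module $\mathbf G_*$ consists of groups $G_1,G_0$, a group homomorphism $\partial:G_1\to G_0$ and a left action of $G_0$ on $G_1$ by group automorphisms, $(x,a)\mapsto {}^x a$, such that $\partial({}^x a)=x\,\partial(a)\,x^{-1}$ and ${}^{\partial(b)}a=bab^{-1}$ for all $x\in G_0$, $a,b\in G_1$. $\pi_0(\mathbf G_* )=G_0/\mathrm{Im}(\partial)$ (a group) and $\pi_1(\mathbf G_* )=\ker(\partial)$, a central subgroup of $G_1$ which is a $\pi_0(\mathbf G_* )$-module via the induced action. $\mathrm{Der}(P,M)$ denotes the group of crossed homomorphisms (1-cocycles) $\phi:P\to M$, $\phi(pq)=\phi(p)+p\cdot\phi(q)$, under pointwise addition. Commutators are $[x,t]=xtx^{-1}t^{-1}$. The set $\mathbf Z_0(\mathbf G_* )$ consists of all pairs $(x,\xi)$ with $x\in G_0$ and $\xi:G_0\to G_1$ a map such that for all $s,t\in G_0$, $a\in G_1$: (Z1) $\partial\xi(t)=[x,t]$; (Z2) $\xi(\partial a)={}^x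 a\cdot a^{-1}$; (Z3) $\xi(st)=\xi(s)\,{}^s\xi(t)$. It is a group under $(x,\xi)\cdot(y,\eta)=(xy,\ t\mapsto {}^x\eta(t)\,\xi(t))$. *)

theory Defs
  imports "HOL-Algebra.Algebra"
begin

definition crossed_module ::
  "'a monoid \<Rightarrow> 'b monoid \<Rightarrow> ('a \<Rightarrow> 'b) \<Rightarrow> ('b \<Rightarrow> 'a \<Rightarrow> 'a) \<Rightarrow> bool" where
  "crossed_module G1 G0 d act \<longleftrightarrow>
     group G1 \<and> group G0 \<and> d \<in> hom G1 G0 \<and>
     (\<forall>x\<in>carrier G0. act x \<in> iso G1 G1) \<and>
     (\<forall>a\<in>carrier G1. act \<one>\<^bsub>G0\<^esub> a = a) \<and>
     (\<forall>x\<in>carrier G0. \<forall>y\<in>carrier G0. \<forall>a\<in>carrier G1.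
        act (x \<otimes>\<^bsub>G0\<^esub> y) a = act x (act y a)) \<and>
     (\<forall>x\<in>carrier G0. \<forall>a\<in>carrier G1.
        d (act x a) = x \<otimes>\<^bsub>G0\<^esub> d a \<otimes>\<^bsub>G0\<^esub> inv\<^bsub>G0\<^esub> x) \<and>
     (\<forall>a\<in>carrier G1. \<forall>b\<in>carrier G1.
        act (d b) a = b \<otimes>\<^bsub>G1\<^esub> a \<otimes>\<^bsub>G1\<^esub> inv\<^bsub>G1\<^esub> b)"

definition pi0 :: "'a monoid \<Rightarrow> 'b monoid \<Rightarrow> ('a \<Rightarrow> 'b) \<Rightarrow> 'b set monoid" where
  "pi0 G1 G0 d = G0 Mod (d ` carrier G1)"

definition pi1 :: "'a monoid \<Rightarrow> 'b monoid \<Rightarrow> ('a \<Rightarrow> 'b) \<Rightarrow> 'a set" where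
  "pi1 G1 G0 d = kernel G1 G0 d"

definition pi0_act :: "('b \<Rightarrow> 'a \<Rightarrow> 'a) \<Rightarrow> 'b set \<Rightarrow> 'a \<Rightarrow> 'a" where
  "pi0_act act C m = act (SOME x. x \<in> C) m"

text \<open>Der(pi_0, pi_1): crossed homomorphisms, with pointwise group law
(the group law of pi_1 is the one of G1, written additively in the paper).\<close>
definition Der :: "'a monoid \<Rightarrow> 'b monoid \<Rightarrow> ('a \<Rightarrow> 'b) \<Rightarrow> ('b \<Rightarrow> 'a \<Rightarrow> 'a)
    \<Rightarrow> ('b set \<Rightarrow> 'a) monoid" where
  "Der G1 G0 d act =
     \<lparr> carrier = {\<phi>. \<phi> \<in> carrier (pi0 G1 G0 d) \<rightarrow> pi1 G1 G0 d \<and>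
                     \<phi> \<in> extensional (carrier (pi0 G1 G0 d)) \<and>
                     (\<forall>p\<in>carrier (pi0 G1 G0 d). \<forall>q\<in>carrier (pi0 G1 G0 d).
                        \<phi> (p \<otimes>\<^bsub>pi0 G1 G0 d\<^esub> q) = \<phi> p \<otimes>\<^bsub>G1\<^esub> pi0_act act p (\<phi> q))},
       monoid.mult = (\<lambda>\<phi> \<psi>. \<lambda>p\<in>carrier (pi0 G1 G0 d). \<phi> p \<otimes>\<^bsub>G1\<^esub> \<psi> p),
       monoid.one = (\<lambda>p\<in>carrier (pi0 G1 G0 d). \<one>\<^bsub>G1\<^esub>) \<rparr>"

definition Z0 :: "'a monoid \<Rightarrow> 'b monoid \<Rightarrow> ('a \<Rightarrow> 'b) \<Rightarrow> ('b \<Rightarrow> 'a \<Rightarrow> 'a)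
    \<Rightarrow> ('b \<times> ('b \<Rightarrow> 'a)) monoid" where
  "Z0 G1 G0 d act =
     \<lparr> carrier = {(x, \<xi>). x \<in> carrier G0 \<and> \<xi> \<in> carrier G0 \<rightarrow> carrier G1 \<and>
                   \<xi> \<in> extensional (carrier G0) \<and>
                   (\<forall>t\<in>carrier G0. d (\<xi> t) =
                      x \<otimes>\<^bsub>G0\<^esub> t \<otimes>\<^bsub>G0\<^esub> inv\<^bsub>G0\<^esub> x \<otimes>\<^bsub>G0\<^esub> inv\<^bsub>G0\<^esub> t) \<and>
                   (\<forall>a\<in>carrier G1. \<xi> (d a) = act x a \<otimes>\<^bsub>G1\<^esub> inv\<^bsub>G1\<^esub> a) \<and>
                   (\<forall>s\<in>carrier G0. \<forall>t\<in>carrier G0.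
                      \<xi> (s \<otimes>\<^bsub>G0\<^esub> t) = \<xi> s \<otimes>\<^bsub>G1\<^esub> act s (\<xi> t))},
       monoid.mult = (\<lambda>(x, \<xi>) (y, \<eta>). (x \<otimes>\<^bsub>G0\<^esub> y,
                  \<lambda>t\<in>carrier G0. act x (\<eta> t) \<otimes>\<^bsub>G1\<^esub> \<xi> t)),
       monoid.one = (\<one>\<^bsub>G0\<^esub>, \<lambda>t\<in>carrier G0. \<one>\<^bsub>G1\<^esub>) \<rparr>"

definition der_to_Z0 :: "'a monoid \<Rightarrow> 'b monoid \<Rightarrow> ('a \<Rightarrow> 'b)
    \<Rightarrow> ('b set \<Rightarrow> 'a) \<Rightarrow> 'b \<times> ('b \<Rightarrow> 'a)" where
  "der_to_Z0 G1 G0 d \<phi> =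
     (\<one>\<^bsub>G0\<^esub>, \<lambda>t\<in>carrier G0. \<phi> ((d ` carrier G1) #>\<^bsub>G0\<^esub> t))"

definition z0 :: "'b \<times> ('b \<Rightarrow> 'a) \<Rightarrow> 'b" where
  "z0 p = fst p"

end

theory Submission imports Defs begin

locale cm = G1: group G1 + G0: group G0
  for G1 :: "'a monoid" and G0 :: "'b monoid" +
  fixes d :: "'a \<Rightarrow> 'b" and act :: "'b \<Rightarrow> 'a \<Rightarrow> 'a"
  assumes d_hom: "d \<in> hom G1 G0"
    and act_iso: "x \<in> carrier G0 \<Longrightarrow> act x \<in> iso G1 G1"
    and act_1: "a \<in> carrier G1 \<Longrightarrow> act \<one>\<^bsub>G0\<^esub> a = a"
    and act_m: "x \<in> carrier G0 \<Longrightarrow> y \<in> carrier G0 \<Longrightarrow> a \<in> carrier G1 \<Longrightarrow>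
        act (x \<otimes>\<^bsub>G0\<^esub> y) a = act x (act y a)"
    and d_act: "x \<in> carrier G0 \<Longrightarrow> a \<in> carrier G1 \<Longrightarrow>
        d (act x a) = x \<otimes>\<^bsub>G0\<^esub> d a \<otimes>\<^bsub>G0\<^esub> inv\<^bsub>G0\<^esub> x"
    and act_d: "a \<in> carrier G1 \<Longrightarrow> b \<in> carrier G1 \<Longrightarrow>
        act (d b) a = b \<otimes>\<^bsub>G1\<^esub> a \<otimes>\<^bsub>G1\<^esub> inv\<^bsub>G1\<^esub> b"

lemma cm_intro: "crossed_module G1 G0 d act \<Longrightarrow> cm G1 G0 d act"
  unfolding crossed_module_def cm_def cm_axioms_def by blast

context cm begin

lemma act_hom: "x \<in> carrier G0 \<Longrightarrow> group_hom G1 G1 (act x)"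
  using act_iso by (simp add: group_hom_def group_hom_axioms_def iso_def G1.is_group)

lemma act_closed[simp]: "x \<in> carrier G0 \<Longrightarrow> a \<in> carrier G1 \<Longrightarrow> act x a \<in> carrier G1"
  using group_hom.hom_closed[OF act_hom] by blast

lemma act_mult: "x \<in> carrier G0 \<Longrightarrow> a \<in> carrier G1 \<Longrightarrow> b \<in> carrier G1 \<Longrightarrow>
   act x (a \<otimes>\<^bsub>G1\<^esub> b) = act x a \<otimes>\<^bsub>G1\<^esub> act x b"
  using group_hom.hom_mult[OF act_hom] by blast

lemma act_one[simp]: "x \<in> carrier G0 \<Longrightarrow> act x \<one>\<^bsub>G1\<^esub> = \<one>\<^bsub>G1\<^esub>"
  using group_hom.hom_one[OF act_hom] by blast

lemma act_inv: "x \<in> carrier G0 \<Longrightarrow> a \<in> carrier G1 \<Longrightarrow> act x (inv\<^bsub>G1\<^esub> a) = inv\<^bsub>G1\<^esub> (act x a)"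
  using group_hom.hom_inv[OF act_hom] by blast

lemma dh: "group_hom G1 G0 d"
  using d_hom by (simp add: group_hom_def group_hom_axioms_def G1.is_group G0.is_group)

lemma d_closed[simp]: "a \<in> carrier G1 \<Longrightarrow> d a \<in> carrier G0"
  using group_hom.hom_closed[OF dh] by blast

lemma d_mult: "a \<in> carrier G1 \<Longrightarrow> b \<in> carrier G1 \<Longrightarrow> d (a \<otimes>\<^bsub>G1\<^esub> b) = d a \<otimes>\<^bsub>G0\<^esub> d b"
  using group_hom.hom_mult[OF dh] by blast

lemma d_one[simp]: "d \<one>\<^bsub>G1\<^esub> = \<one>\<^bsub>G0\<^esub>"
  using group_hom.hom_one[OF dh] .

lemma d_inv: "a \<in> carrier G1 \<Longrightarrow> d (inv\<^bsub>G1\<^esub> a) = inv\<^bsub>G0\<^esub> (d a)"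
  using group_hom.hom_inv[OF dh] by blast

abbreviation "K \<equiv> kernel G1 G0 d"
abbreviation "I \<equiv> d ` carrier G1"

lemma K_sub: "subgroup K G1"
  using group_hom.subgroup_kernel[OF dh] .

lemma KD: "k \<in> K \<Longrightarrow> k \<in> carrier G1 \<and> d k = \<one>\<^bsub>G0\<^esub>"
  by (simp add: kernel_def)

lemma central: assumes "k \<in> K" "a \<in> carrier G1" shows "a \<otimes>\<^bsub>G1\<^esub> k = k \<otimes>\<^bsub>G1\<^esub> a"
proof -
  have k: "k \<in> carrier G1" "d k = \<one>\<^bsub>G0\<^esub>" using KD assms by auto
  have "a = k \<otimes>\<^bsub>G1\<^esub> a \<otimes>\<^bsub>G1\<^esub> inv\<^bsub>G1\<^esub> k"
    using act_d[OF assms(2) k(1)] k act_1 assms by simp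
  then show ?thesis using k assms
    by (metis G1.inv_solve_right G1.m_closed)
qed

lemma act_K: assumes x: "x \<in> carrier G0" and kk: "k \<in> K" shows "act x k \<in> K"
proof -
  have k: "k \<in> carrier G1" "d k = \<one>\<^bsub>G0\<^esub>" using KD[OF kk] by auto
  have "d (act x k) = \<one>\<^bsub>G0\<^esub>" using d_act[OF x k(1)] k(2) x by simp
  then show ?thesis using k x unfolding kernel_def by simp
qed

lemma act_dK: "a \<in> carrier G1 \<Longrightarrow> k \<in> K \<Longrightarrow> act (d a) k = k"
proof -
  assume a: "a \<in> carrier G1" and kk: "k \<in> K"
  have k: "k \<in> carrier G1" using KD[OF kk] by auto
  have "act (d a) k = k \<otimes>\<^bsub>G1\<^esub> a \<otimes>\<^bsub>G1\<^esub> inv\<^bsub>G1\<^esub> a"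
    using act_d[OF k a] central[OF kk a] by simp
  then show ?thesis using a k by (simp add: G1.m_assoc)
qed

lemma I_normal: "I \<lhd> G0"
proof -
  have "subgroup I G0" using dh group_hom.img_is_subgroup by blast
  moreover have "\<forall>x\<in>carrier G0. \<forall>h\<in>I. x \<otimes>\<^bsub>G0\<^esub> h \<otimes>\<^bsub>G0\<^esub> inv\<^bsub>G0\<^esub> x \<in> I"
    using d_act by (auto simp: image_iff) (metis act_closed)
  ultimately show ?thesis by (simp add: G0.normal_inv_iff)
qed


abbreviation "P \<equiv> pi0 G1 G0 d"

lemma P_eq: "P = G0 Mod I" by (simp add: pi0_def)

lemma P_group: "group P"
  using I_normal normal.factorgroup_is_group P_eq by metis

lemma P_carrier: "carrier P = (\<lambda>s. r_coset G0 I s) ` carrier G0"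
  by (simp add: P_eq carrier_FactGroup)

lemma P_cosetI[simp]: "s \<in> carrier G0 \<Longrightarrow> r_coset G0 I s \<in> carrier P"
  by (simp add: P_carrier)

lemma P_mult: "s \<in> carrier G0 \<Longrightarrow> t \<in> carrier G0 \<Longrightarrow>
  r_coset G0 I s \<otimes>\<^bsub>P\<^esub> r_coset G0 I t = r_coset G0 I (s \<otimes>\<^bsub>G0\<^esub> t)"
  using I_normal normal.rcos_sum by (fastforce simp: P_eq)

lemma P_cases: assumes "p \<in> carrier P" obtains s where "s \<in> carrier G0" "p = r_coset G0 I s"
  using assms P_carrier by auto

lemma pi0_act_coset: assumes "s \<in> carrier G0" "m \<in> K"
  shows "pi0_act act (r_coset G0 I s) m = act s m"
proof -
  have sub: "subgroup I G0" using I_normal normal_imp_subgroup by blast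
  have "s \<in> r_coset G0 I s" using G0.rcos_self[OF assms(1) sub] .
  then have "(SOME x. x \<in> r_coset G0 I s) \<in> r_coset G0 I s" by (rule someI)
  then obtain a where a: "a \<in> carrier G1" "(SOME x. x \<in> r_coset G0 I s) = d a \<otimes>\<^bsub>G0\<^esub> s"
    unfolding r_coset_def by auto
  have "act (d a \<otimes>\<^bsub>G0\<^esub> s) m = act s m"
    using act_m[of "d a" s m] a assms KD act_dK act_K by simp
  then show ?thesis using a by (simp add: pi0_act_def)
qed

lemma pi1_eq: "pi1 G1 G0 d = K" by (simp add: pi1_def)

lemma K_closed[simp]: "k \<in> K \<Longrightarrow> k \<in> carrier G1" using KD by blast

lemma K_mult[simp]: "k \<in> K \<Longrightarrow> l \<in> K \<Longrightarrow> k \<otimes>\<^bsub>G1\<^esub> l \<in> K"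
  using subgroup.m_closed[OF K_sub] by blast

lemma K_inv[simp]: "k \<in> K \<Longrightarrow> inv\<^bsub>G1\<^esub> k \<in> K"
  using subgroup.m_inv_closed[OF K_sub] by blast

lemma K_one[simp]: "\<one>\<^bsub>G1\<^esub> \<in> K"
  using subgroup.one_closed[OF K_sub] by blast

lemma Der_mem: "\<phi> \<in> carrier (Der G1 G0 d act) \<longleftrightarrow>
   \<phi> \<in> carrier P \<rightarrow> K \<and> \<phi> \<in> extensional (carrier P) \<and>
   (\<forall>s\<in>carrier G0. \<forall>t\<in>carrier G0.
      \<phi> (r_coset G0 I (s \<otimes>\<^bsub>G0\<^esub> t)) = \<phi> (r_coset G0 I s) \<otimes>\<^bsub>G1\<^esub> act s (\<phi> (r_coset G0 I t)))"
proof -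
  have "(\<forall>p\<in>carrier P. \<forall>q\<in>carrier P.
          \<phi> (p \<otimes>\<^bsub>P\<^esub> q) = \<phi> p \<otimes>\<^bsub>G1\<^esub> pi0_act act p (\<phi> q)) \<longleftrightarrow>
        (\<forall>s\<in>carrier G0. \<forall>t\<in>carrier G0.
      \<phi> (r_coset G0 I (s \<otimes>\<^bsub>G0\<^esub> t)) = \<phi> (r_coset G0 I s) \<otimes>\<^bsub>G1\<^esub> act s (\<phi> (r_coset G0 I t)))"
    if "\<phi> \<in> carrier P \<rightarrow> K"
  proof -
    have K: "t \<in> carrier G0 \<Longrightarrow> \<phi> (r_coset G0 I t) \<in> K" for t using that by auto
    show ?thesis using K by (auto simp: P_carrier P_mult pi0_act_coset)
  qed
  then show ?thesis by (auto simp: Der_def pi1_eq)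
qed

lemma Der_mult: "\<phi> \<otimes>\<^bsub>Der G1 G0 d act\<^esub> \<psi> = (\<lambda>p\<in>carrier P. \<phi> p \<otimes>\<^bsub>G1\<^esub> \<psi> p)"
  by (simp add: Der_def)

lemma Der_one: "\<one>\<^bsub>Der G1 G0 d act\<^esub> = (\<lambda>p\<in>carrier P. \<one>\<^bsub>G1\<^esub>)"
  by (simp add: Der_def)

lemma comm4: "a \<in> K \<Longrightarrow> b \<in> K \<Longrightarrow> c \<in> K \<Longrightarrow> e \<in> K \<Longrightarrow>
  a \<otimes>\<^bsub>G1\<^esub> b \<otimes>\<^bsub>G1\<^esub> (c \<otimes>\<^bsub>G1\<^esub> e) = a \<otimes>\<^bsub>G1\<^esub> c \<otimes>\<^bsub>G1\<^esub> (b \<otimes>\<^bsub>G1\<^esub> e)"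
proof -
  assume K: "a \<in> K" "b \<in> K" "c \<in> K" "e \<in> K"
  have bc: "b \<otimes>\<^bsub>G1\<^esub> c = c \<otimes>\<^bsub>G1\<^esub> b" using central[of c b] K by simp
  have "a \<otimes>\<^bsub>G1\<^esub> b \<otimes>\<^bsub>G1\<^esub> (c \<otimes>\<^bsub>G1\<^esub> e) = a \<otimes>\<^bsub>G1\<^esub> (b \<otimes>\<^bsub>G1\<^esub> c) \<otimes>\<^bsub>G1\<^esub> e"
    using K by (simp add: G1.m_assoc)
  also have "\<dots> = a \<otimes>\<^bsub>G1\<^esub> (c \<otimes>\<^bsub>G1\<^esub> b) \<otimes>\<^bsub>G1\<^esub> e" by (simp only: bc)
  also have "\<dots> = a \<otimes>\<^bsub>G1\<^esub> c \<otimes>\<^bsub>G1\<^esub> (b \<otimes>\<^bsub>G1\<^esub> e)"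
    using K by (simp add: G1.m_assoc)
  finally show ?thesis .
qed

lemma Der_val: "\<phi> \<in> carrier (Der G1 G0 d act) \<Longrightarrow> p \<in> carrier P \<Longrightarrow> \<phi> p \<in> K"
  unfolding Der_mem by blast

lemma Der_vals: "\<phi> \<in> carrier (Der G1 G0 d act) \<Longrightarrow> s \<in> carrier G0 \<Longrightarrow> \<phi> (r_coset G0 I s) \<in> K"
  by (rule Der_val) simp_all

lemma Der_ext: "\<phi> \<in> carrier (Der G1 G0 d act) \<Longrightarrow> p \<notin> carrier P \<Longrightarrow> \<phi> p = undefined"
  unfolding Der_mem by (blast intro: extensional_arb)

lemma Der_cross: "\<phi> \<in> carrier (Der G1 G0 d act) \<Longrightarrow> s \<in> carrier G0 \<Longrightarrow> t \<in> carrier G0 \<Longrightarrow>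
  \<phi> (r_coset G0 I (s \<otimes>\<^bsub>G0\<^esub> t)) = \<phi> (r_coset G0 I s) \<otimes>\<^bsub>G1\<^esub> act s (\<phi> (r_coset G0 I t))"
  unfolding Der_mem by blast

lemma Der_group: "group (Der G1 G0 d act)"
proof (rule groupI)
  fix \<phi> \<psi> assume a: "\<phi> \<in> carrier (Der G1 G0 d act)" "\<psi> \<in> carrier (Der G1 G0 d act)"
  show "\<phi> \<otimes>\<^bsub>Der G1 G0 d act\<^esub> \<psi> \<in> carrier (Der G1 G0 d act)"
    unfolding Der_mult Der_mem
  proof (intro conjI ballI)
    show "(\<lambda>p\<in>carrier P. \<phi> p \<otimes>\<^bsub>G1\<^esub> \<psi> p) \<in> carrier P \<rightarrow> K"
      using Der_val[OF a(1)] Der_val[OF a(2)] by (auto intro!: K_mult)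
    show "(\<lambda>p\<in>carrier P. \<phi> p \<otimes>\<^bsub>G1\<^esub> \<psi> p) \<in> extensional (carrier P)" by simp
    fix s t assume st: "s \<in> carrier G0" "t \<in> carrier G0"
    have K: "\<phi> (r_coset G0 I s) \<in> K" "\<phi> (r_coset G0 I t) \<in> K"
      "\<psi> (r_coset G0 I s) \<in> K" "\<psi> (r_coset G0 I t) \<in> K"
      using Der_vals a st by blast+
    have c1: "\<phi> (r_coset G0 I (s \<otimes>\<^bsub>G0\<^esub> t)) = \<phi> (r_coset G0 I s) \<otimes>\<^bsub>G1\<^esub> act s (\<phi> (r_coset G0 I t))"
      by (rule Der_cross[OF a(1) st])
    have c2: "\<psi> (r_coset G0 I (s \<otimes>\<^bsub>G0\<^esub> t)) = \<psi> (r_coset G0 I s) \<otimes>\<^bsub>G1\<^esub> act s (\<psi> (r_coset G0 I t))"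
      by (rule Der_cross[OF a(2) st])
    have aK: "act s (\<phi> (r_coset G0 I t)) \<in> K" "act s (\<psi> (r_coset G0 I t)) \<in> K"
      using act_K st K by blast+
    have "\<phi> (r_coset G0 I (s \<otimes>\<^bsub>G0\<^esub> t)) \<otimes>\<^bsub>G1\<^esub> \<psi> (r_coset G0 I (s \<otimes>\<^bsub>G0\<^esub> t))
      = \<phi> (r_coset G0 I s) \<otimes>\<^bsub>G1\<^esub> \<psi> (r_coset G0 I s) \<otimes>\<^bsub>G1\<^esub>
        (act s (\<phi> (r_coset G0 I t)) \<otimes>\<^bsub>G1\<^esub> act s (\<psi> (r_coset G0 I t)))"
      unfolding c1 c2 by (rule comm4) (fact K aK)+
    also have "\<dots> = \<phi> (r_coset G0 I s) \<otimes>\<^bsub>G1\<^esub> \<psi> (r_coset G0 I s) \<otimes>\<^bsub>G1\<^esub>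
        act s (\<phi> (r_coset G0 I t) \<otimes>\<^bsub>G1\<^esub> \<psi> (r_coset G0 I t))"
      using K st by (simp add: act_mult)
    finally show "(\<lambda>p\<in>carrier P. \<phi> p \<otimes>\<^bsub>G1\<^esub> \<psi> p) (r_coset G0 I (s \<otimes>\<^bsub>G0\<^esub> t)) =
      (\<lambda>p\<in>carrier P. \<phi> p \<otimes>\<^bsub>G1\<^esub> \<psi> p) (r_coset G0 I s) \<otimes>\<^bsub>G1\<^esub>
      act s ((\<lambda>p\<in>carrier P. \<phi> p \<otimes>\<^bsub>G1\<^esub> \<psi> p) (r_coset G0 I t))"
      using st by simp
  qed
next
  show "\<one>\<^bsub>Der G1 G0 d act\<^esub> \<in> carrier (Der G1 G0 d act)"
    unfolding Der_one Der_mem by simp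
next
  fix x y z assume a: "x \<in> carrier (Der G1 G0 d act)" "y \<in> carrier (Der G1 G0 d act)"
     "z \<in> carrier (Der G1 G0 d act)"
  show "x \<otimes>\<^bsub>Der G1 G0 d act\<^esub> y \<otimes>\<^bsub>Der G1 G0 d act\<^esub> z =
        x \<otimes>\<^bsub>Der G1 G0 d act\<^esub> (y \<otimes>\<^bsub>Der G1 G0 d act\<^esub> z)"
  proof
    fix p show "(x \<otimes>\<^bsub>Der G1 G0 d act\<^esub> y \<otimes>\<^bsub>Der G1 G0 d act\<^esub> z) p =
        (x \<otimes>\<^bsub>Der G1 G0 d act\<^esub> (y \<otimes>\<^bsub>Der G1 G0 d act\<^esub> z)) p"
    proof (cases "p \<in> carrier P")
      case True
      then have "x p \<in> carrier G1" "y p \<in> carrier G1" "z p \<in> carrier G1"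
        using Der_val a K_closed by blast+
      then show ?thesis using True by (simp add: Der_mult G1.m_assoc)
    qed (simp add: Der_mult)
  qed
next
  fix x assume a: "x \<in> carrier (Der G1 G0 d act)"
  show "\<one>\<^bsub>Der G1 G0 d act\<^esub> \<otimes>\<^bsub>Der G1 G0 d act\<^esub> x = x"
  proof
    fix p show "(\<one>\<^bsub>Der G1 G0 d act\<^esub> \<otimes>\<^bsub>Der G1 G0 d act\<^esub> x) p = x p"
    proof (cases "p \<in> carrier P")
      case True
      then have "x p \<in> carrier G1" using Der_val a K_closed by blast
      then show ?thesis using True by (simp add: Der_mult Der_one)
    next
      case False then show ?thesis using Der_ext[OF a False] by (simp add: Der_mult)
    qed
  qed
next
  fix \<phi> assume a: "\<phi> \<in> carrier (Der G1 G0 d act)"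
  let ?\<psi> = "\<lambda>p\<in>carrier P. inv\<^bsub>G1\<^esub> (\<phi> p)"
  have "?\<psi> \<in> carrier (Der G1 G0 d act)"
    unfolding Der_mem
  proof (intro conjI ballI)
    show "?\<psi> \<in> carrier P \<rightarrow> K" using Der_val[OF a] by auto
    show "?\<psi> \<in> extensional (carrier P)" by simp
    fix s t assume st: "s \<in> carrier G0" "t \<in> carrier G0"
    have K: "\<phi> (r_coset G0 I s) \<in> K" "\<phi> (r_coset G0 I t) \<in> K"
      using Der_vals a st by blast+
    have aK: "act s (\<phi> (r_coset G0 I t)) \<in> K" using act_K st K by blast
    have cc: "inv\<^bsub>G1\<^esub> (act s (\<phi> (r_coset G0 I t))) \<otimes>\<^bsub>G1\<^esub> inv\<^bsub>G1\<^esub> (\<phi> (r_coset G0 I s))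
         = inv\<^bsub>G1\<^esub> (\<phi> (r_coset G0 I s)) \<otimes>\<^bsub>G1\<^esub> inv\<^bsub>G1\<^esub> (act s (\<phi> (r_coset G0 I t)))"
      by (rule central) (use K aK in simp_all)
    have "inv\<^bsub>G1\<^esub> (\<phi> (r_coset G0 I s) \<otimes>\<^bsub>G1\<^esub> act s (\<phi> (r_coset G0 I t))) =
       inv\<^bsub>G1\<^esub> (\<phi> (r_coset G0 I s)) \<otimes>\<^bsub>G1\<^esub> act s (inv\<^bsub>G1\<^esub> (\<phi> (r_coset G0 I t)))"
      using K aK st by (simp add: G1.inv_mult_group act_inv cc)
    then show "?\<psi> (r_coset G0 I (s \<otimes>\<^bsub>G0\<^esub> t)) = ?\<psi> (r_coset G0 I s) \<otimes>\<^bsub>G1\<^esub> act s (?\<psi> (r_coset G0 I t))"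
      using st Der_cross[OF a st] by simp
  qed
  moreover have "?\<psi> \<otimes>\<^bsub>Der G1 G0 d act\<^esub> \<phi> = \<one>\<^bsub>Der G1 G0 d act\<^esub>"
  proof
    fix p show "(?\<psi> \<otimes>\<^bsub>Der G1 G0 d act\<^esub> \<phi>) p = \<one>\<^bsub>Der G1 G0 d act\<^esub> p"
    proof (cases "p \<in> carrier P")
      case True
      then have "\<phi> p \<in> carrier G1" using Der_val a K_closed by blast
      then show ?thesis using True by (simp add: Der_mult Der_one)
    qed (simp add: Der_mult Der_one)
  qed
  ultimately show "\<exists>y\<in>carrier (Der G1 G0 d act). y \<otimes>\<^bsub>Der G1 G0 d act\<^esub> \<phi> = \<one>\<^bsub>Der G1 G0 d act\<^esub>"
    by blast
qed


end

lemma (in group) cancel1[simp]: "a \<in> carrier G \<Longrightarrow> b \<in> carrier G \<Longrightarrow> inv a \<otimes> (a \<otimes> b) = b"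
  by (simp add: m_assoc[symmetric])
lemma (in group) cancel2[simp]: "a \<in> carrier G \<Longrightarrow> b \<in> carrier G \<Longrightarrow> a \<otimes> (inv a \<otimes> b) = b"
  by (simp add: m_assoc[symmetric])
lemma (in group) conj_swap: "a \<in> carrier G \<Longrightarrow> b \<in> carrier G \<Longrightarrow> c \<in> carrier G \<Longrightarrow>
   a \<otimes> b = c \<otimes> a \<Longrightarrow> b \<otimes> inv a = inv a \<otimes> c"
  by (metis cancel1 inv_closed inv_solve_right' m_assoc m_closed)

definition Z0P where "Z0P G1 G0 d act x \<xi> \<longleftrightarrow> x \<in> carrier G0 \<and> \<xi> \<in> carrier G0 \<rightarrow> carrier G1 \<and>
                   \<xi> \<in> extensional (carrier G0) \<and>
                   (\<forall>t\<in>carrier G0. d (\<xi> t) =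
                      x \<otimes>\<^bsub>G0\<^esub> t \<otimes>\<^bsub>G0\<^esub> inv\<^bsub>G0\<^esub> x \<otimes>\<^bsub>G0\<^esub> inv\<^bsub>G0\<^esub> t) \<and>
                   (\<forall>a\<in>carrier G1. \<xi> (d a) = act x a \<otimes>\<^bsub>G1\<^esub> inv\<^bsub>G1\<^esub> a) \<and>
                   (\<forall>s\<in>carrier G0. \<forall>t\<in>carrier G0.
                      \<xi> (s \<otimes>\<^bsub>G0\<^esub> t) = \<xi> s \<otimes>\<^bsub>G1\<^esub> act s (\<xi> t))"

context cm begin

abbreviation "Z \<equiv> Z0 G1 G0 d act"

lemma Z0_mem: "(x, \<xi>) \<in> carrier Z \<longleftrightarrow> Z0P G1 G0 d act x \<xi>"
  by (simp add: Z0_def Z0P_def)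

lemma Z0_mult: "(x, \<xi>) \<otimes>\<^bsub>Z\<^esub> (y, \<eta>) = (x \<otimes>\<^bsub>G0\<^esub> y, \<lambda>t\<in>carrier G0. act x (\<eta> t) \<otimes>\<^bsub>G1\<^esub> \<xi> t)"
  by (simp add: Z0_def)

lemma Z0_one: "\<one>\<^bsub>Z\<^esub> = (\<one>\<^bsub>G0\<^esub>, \<lambda>t\<in>carrier G0. \<one>\<^bsub>G1\<^esub>)"
  by (simp add: Z0_def)

lemma xi_conj: assumes "Z0P G1 G0 d act x \<xi>" "s \<in> carrier G0" "v \<in> carrier G1"
  shows "\<xi> s \<otimes>\<^bsub>G1\<^esub> act s v = act (x \<otimes>\<^bsub>G0\<^esub> s \<otimes>\<^bsub>G0\<^esub> inv\<^bsub>G0\<^esub> x) v \<otimes>\<^bsub>G1\<^esub> \<xi> s"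
proof -
  have x: "x \<in> carrier G0" and xs: "\<xi> s \<in> carrier G1"
    and dx: "d (\<xi> s) = x \<otimes>\<^bsub>G0\<^esub> s \<otimes>\<^bsub>G0\<^esub> inv\<^bsub>G0\<^esub> x \<otimes>\<^bsub>G0\<^esub> inv\<^bsub>G0\<^esub> s"
    using assms by (auto simp: Z0P_def)
  have "act (d (\<xi> s)) (act s v) = \<xi> s \<otimes>\<^bsub>G1\<^esub> act s v \<otimes>\<^bsub>G1\<^esub> inv\<^bsub>G1\<^esub> (\<xi> s)"
    using act_d xs assms by simp
  moreover have "act (d (\<xi> s)) (act s v) = act (x \<otimes>\<^bsub>G0\<^esub> s \<otimes>\<^bsub>G0\<^esub> inv\<^bsub>G0\<^esub> x) v"
    using x assms dx act_m[of "d (\<xi> s)" s v, symmetric]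
    by (simp add: xs G0.m_assoc)
  ultimately show ?thesis using x xs assms
    by (metis G0.inv_closed G0.m_closed G1.inv_solve_right' act_closed G1.m_closed)
qed

lemma xi_comm: assumes "Z0P G1 G0 d act x \<xi>" "s \<in> carrier G0" "w \<in> carrier G1"
  shows "act x (act s w) \<otimes>\<^bsub>G1\<^esub> \<xi> s = \<xi> s \<otimes>\<^bsub>G1\<^esub> act s (act x w)"
proof -
  have x: "x \<in> carrier G0" using assms by (auto simp: Z0P_def)
  have "act (x \<otimes>\<^bsub>G0\<^esub> s \<otimes>\<^bsub>G0\<^esub> inv\<^bsub>G0\<^esub> x) (act x w) = act x (act s w)"
    using x assms by (simp add: act_m[symmetric] G0.m_assoc)
  then show ?thesis using xi_conj[OF assms(1,2), of "act x w"] x assms by simp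
qed

lemma Z0_mult_closed: assumes A: "Z0P G1 G0 d act x \<xi>" and B: "Z0P G1 G0 d act y \<eta>"
  shows "Z0P G1 G0 d act (x \<otimes>\<^bsub>G0\<^esub> y) (\<lambda>t\<in>carrier G0. act x (\<eta> t) \<otimes>\<^bsub>G1\<^esub> \<xi> t)"
proof -
  have x: "x \<in> carrier G0" and xi: "\<xi> \<in> carrier G0 \<rightarrow> carrier G1"
    and Z1x: "\<And>t. t \<in> carrier G0 \<Longrightarrow> d (\<xi> t) = x \<otimes>\<^bsub>G0\<^esub> t \<otimes>\<^bsub>G0\<^esub> inv\<^bsub>G0\<^esub> x \<otimes>\<^bsub>G0\<^esub> inv\<^bsub>G0\<^esub> t"
    and Z2x: "\<And>a. a \<in> carrier G1 \<Longrightarrow> \<xi> (d a) = act x a \<otimes>\<^bsub>G1\<^esub> inv\<^bsub>G1\<^esub> a"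
    and Z3x: "\<And>s t. s \<in> carrier G0 \<Longrightarrow> t \<in> carrier G0 \<Longrightarrow> \<xi> (s \<otimes>\<^bsub>G0\<^esub> t) = \<xi> s \<otimes>\<^bsub>G1\<^esub> act s (\<xi> t)"
    using A by (auto simp: Z0P_def)
  have y: "y \<in> carrier G0" and eta: "\<eta> \<in> carrier G0 \<rightarrow> carrier G1"
    and Z1y: "\<And>t. t \<in> carrier G0 \<Longrightarrow> d (\<eta> t) = y \<otimes>\<^bsub>G0\<^esub> t \<otimes>\<^bsub>G0\<^esub> inv\<^bsub>G0\<^esub> y \<otimes>\<^bsub>G0\<^esub> inv\<^bsub>G0\<^esub> t"
    and Z2y: "\<And>a. a \<in> carrier G1 \<Longrightarrow> \<eta> (d a) = act y a \<otimes>\<^bsub>G1\<^esub> inv\<^bsub>G1\<^esub> a"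
    and Z3y: "\<And>s t. s \<in> carrier G0 \<Longrightarrow> t \<in> carrier G0 \<Longrightarrow> \<eta> (s \<otimes>\<^bsub>G0\<^esub> t) = \<eta> s \<otimes>\<^bsub>G1\<^esub> act s (\<eta> t)"
    using B by (auto simp: Z0P_def)
  have xic[simp]: "t \<in> carrier G0 \<Longrightarrow> \<xi> t \<in> carrier G1" for t using xi by auto
  have etac[simp]: "t \<in> carrier G0 \<Longrightarrow> \<eta> t \<in> carrier G1" for t using eta by auto
  show ?thesis unfolding Z0P_def
  proof (intro conjI ballI)
    show "x \<otimes>\<^bsub>G0\<^esub> y \<in> carrier G0" using x y by simp
    show "(\<lambda>t\<in>carrier G0. act x (\<eta> t) \<otimes>\<^bsub>G1\<^esub> \<xi> t) \<in> carrier G0 \<rightarrow> carrier G1" using x by auto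
    show "(\<lambda>t\<in>carrier G0. act x (\<eta> t) \<otimes>\<^bsub>G1\<^esub> \<xi> t) \<in> extensional (carrier G0)" by simp
  next
    fix t assume t: "t \<in> carrier G0"
    show "d ((\<lambda>t\<in>carrier G0. act x (\<eta> t) \<otimes>\<^bsub>G1\<^esub> \<xi> t) t) =
       x \<otimes>\<^bsub>G0\<^esub> y \<otimes>\<^bsub>G0\<^esub> t \<otimes>\<^bsub>G0\<^esub> inv\<^bsub>G0\<^esub> (x \<otimes>\<^bsub>G0\<^esub> y) \<otimes>\<^bsub>G0\<^esub> inv\<^bsub>G0\<^esub> t"
      using t x y by (simp add: d_mult d_act Z1x Z1y G0.m_assoc G0.inv_mult_group)
  next
    fix a assume a: "a \<in> carrier G1"
    show "(\<lambda>t\<in>carrier G0. act x (\<eta> t) \<otimes>\<^bsub>G1\<^esub> \<xi> t) (d a) =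
       act (x \<otimes>\<^bsub>G0\<^esub> y) a \<otimes>\<^bsub>G1\<^esub> inv\<^bsub>G1\<^esub> a"
      using a x y by (simp add: Z2x Z2y act_mult act_inv act_m G1.m_assoc)
  next
    fix s t assume st: "s \<in> carrier G0" "t \<in> carrier G0"
    have c: "act x (act s (\<eta> t)) \<otimes>\<^bsub>G1\<^esub> \<xi> s = \<xi> s \<otimes>\<^bsub>G1\<^esub> act s (act x (\<eta> t))"
      using xi_comm[OF A st(1), of "\<eta> t"] st by simp
    have "act x (\<eta> (s \<otimes>\<^bsub>G0\<^esub> t)) \<otimes>\<^bsub>G1\<^esub> \<xi> (s \<otimes>\<^bsub>G0\<^esub> t)
        = act x (\<eta> s) \<otimes>\<^bsub>G1\<^esub> (act x (act s (\<eta> t)) \<otimes>\<^bsub>G1\<^esub> \<xi> s) \<otimes>\<^bsub>G1\<^esub> act s (\<xi> t)"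
      using st x by (simp add: Z3x Z3y act_mult G1.m_assoc)
    also have "\<dots> = act x (\<eta> s) \<otimes>\<^bsub>G1\<^esub> \<xi> s \<otimes>\<^bsub>G1\<^esub> act s (act x (\<eta> t) \<otimes>\<^bsub>G1\<^esub> \<xi> t)"
      unfolding c using st x by (simp add: act_mult G1.m_assoc)
    finally show "(\<lambda>t\<in>carrier G0. act x (\<eta> t) \<otimes>\<^bsub>G1\<^esub> \<xi> t) (s \<otimes>\<^bsub>G0\<^esub> t) =
       (\<lambda>t\<in>carrier G0. act x (\<eta> t) \<otimes>\<^bsub>G1\<^esub> \<xi> t) s \<otimes>\<^bsub>G1\<^esub>
       act s ((\<lambda>t\<in>carrier G0. act x (\<eta> t) \<otimes>\<^bsub>G1\<^esub> \<xi> t) t)"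
      using st by simp
  qed
qed


lemma Z0_inv_closed: assumes A: "Z0P G1 G0 d act x \<xi>"
  shows "Z0P G1 G0 d act (inv\<^bsub>G0\<^esub> x) (\<lambda>t\<in>carrier G0. act (inv\<^bsub>G0\<^esub> x) (inv\<^bsub>G1\<^esub> (\<xi> t)))"
proof -
  have x: "x \<in> carrier G0" and xi: "\<xi> \<in> carrier G0 \<rightarrow> carrier G1"
    and Z1x: "\<And>t. t \<in> carrier G0 \<Longrightarrow> d (\<xi> t) = x \<otimes>\<^bsub>G0\<^esub> t \<otimes>\<^bsub>G0\<^esub> inv\<^bsub>G0\<^esub> x \<otimes>\<^bsub>G0\<^esub> inv\<^bsub>G0\<^esub> t"
    and Z2x: "\<And>a. a \<in> carrier G1 \<Longrightarrow> \<xi> (d a) = act x a \<otimes>\<^bsub>G1\<^esub> inv\<^bsub>G1\<^esub> a"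
    and Z3x: "\<And>s t. s \<in> carrier G0 \<Longrightarrow> t \<in> carrier G0 \<Longrightarrow> \<xi> (s \<otimes>\<^bsub>G0\<^esub> t) = \<xi> s \<otimes>\<^bsub>G1\<^esub> act s (\<xi> t)"
    using A by (auto simp: Z0P_def)
  have xic[simp]: "t \<in> carrier G0 \<Longrightarrow> \<xi> t \<in> carrier G1" for t using xi by auto
  let ?x = "inv\<^bsub>G0\<^esub> x"
  have xx[simp]: "?x \<in> carrier G0" using x by simp
  have bk[simp]: "a \<in> carrier G1 \<Longrightarrow> act ?x (act x a) = a" for a
    using x by (simp add: act_m[symmetric] act_1)
  show ?thesis unfolding Z0P_def
  proof (intro conjI ballI)
    show "?x \<in> carrier G0" by simp
    show "(\<lambda>t\<in>carrier G0. act ?x (inv\<^bsub>G1\<^esub> (\<xi> t))) \<in> carrier G0 \<rightarrow> carrier G1" by auto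
    show "(\<lambda>t\<in>carrier G0. act ?x (inv\<^bsub>G1\<^esub> (\<xi> t))) \<in> extensional (carrier G0)" by simp
  next
    fix t assume t: "t \<in> carrier G0"
    show "d ((\<lambda>t\<in>carrier G0. act ?x (inv\<^bsub>G1\<^esub> (\<xi> t))) t) =
       ?x \<otimes>\<^bsub>G0\<^esub> t \<otimes>\<^bsub>G0\<^esub> inv\<^bsub>G0\<^esub> ?x \<otimes>\<^bsub>G0\<^esub> inv\<^bsub>G0\<^esub> t"
      using t x by (simp add: d_act d_inv Z1x G0.m_assoc G0.inv_mult_group)
  next
    fix a assume a: "a \<in> carrier G1"
    show "(\<lambda>t\<in>carrier G0. act ?x (inv\<^bsub>G1\<^esub> (\<xi> t))) (d a) =
       act ?x a \<otimes>\<^bsub>G1\<^esub> inv\<^bsub>G1\<^esub> a"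
      using a x by (simp add: Z2x act_mult act_inv G1.inv_mult_group)
  next
    fix s t assume st: "s \<in> carrier G0" "t \<in> carrier G0"
    define u where "u = inv\<^bsub>G1\<^esub> (\<xi> t)"
    have u[simp]: "u \<in> carrier G1" using st by (simp add: u_def)
    have E: "\<xi> s \<otimes>\<^bsub>G1\<^esub> act s u = act (x \<otimes>\<^bsub>G0\<^esub> s \<otimes>\<^bsub>G0\<^esub> inv\<^bsub>G0\<^esub> x) u \<otimes>\<^bsub>G1\<^esub> \<xi> s"
      using xi_conj[OF A st(1) u] .
    have E2: "act s u \<otimes>\<^bsub>G1\<^esub> inv\<^bsub>G1\<^esub> (\<xi> s) =
         inv\<^bsub>G1\<^esub> (\<xi> s) \<otimes>\<^bsub>G1\<^esub> act (x \<otimes>\<^bsub>G0\<^esub> s \<otimes>\<^bsub>G0\<^esub> inv\<^bsub>G0\<^esub> x) u"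
      using G1.conj_swap[OF _ _ _ E] st x by simp
    have e3: "act s (act ?x u) = act ?x (act (x \<otimes>\<^bsub>G0\<^esub> s \<otimes>\<^bsub>G0\<^esub> inv\<^bsub>G0\<^esub> x) u)"
      using st x by (simp add: act_m[symmetric] G0.m_assoc)
    have "act ?x (inv\<^bsub>G1\<^esub> (\<xi> (s \<otimes>\<^bsub>G0\<^esub> t))) = act ?x (act s u \<otimes>\<^bsub>G1\<^esub> inv\<^bsub>G1\<^esub> (\<xi> s))"
      using st by (simp add: Z3x G1.inv_mult_group act_inv u_def)
    also have "\<dots> = act ?x (inv\<^bsub>G1\<^esub> (\<xi> s)) \<otimes>\<^bsub>G1\<^esub> act s (act ?x u)"
      unfolding E2 e3 using st x by (simp add: act_mult)
    finally show "(\<lambda>t\<in>carrier G0. act ?x (inv\<^bsub>G1\<^esub> (\<xi> t))) (s \<otimes>\<^bsub>G0\<^esub> t) =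
       (\<lambda>t\<in>carrier G0. act ?x (inv\<^bsub>G1\<^esub> (\<xi> t))) s \<otimes>\<^bsub>G1\<^esub>
       act s ((\<lambda>t\<in>carrier G0. act ?x (inv\<^bsub>G1\<^esub> (\<xi> t))) t)"
      using st by (simp add: u_def)
  qed
qed

lemma Z0P_x: "Z0P G1 G0 d act x \<xi> \<Longrightarrow> x \<in> carrier G0" by (simp add: Z0P_def)
lemma Z0P_val: "Z0P G1 G0 d act x \<xi> \<Longrightarrow> t \<in> carrier G0 \<Longrightarrow> \<xi> t \<in> carrier G1"
  unfolding Z0P_def by blast
lemma Z0P_ext: "Z0P G1 G0 d act x \<xi> \<Longrightarrow> t \<notin> carrier G0 \<Longrightarrow> \<xi> t = undefined"
  unfolding Z0P_def by (blast intro: extensional_arb)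

lemma Z0_group: "group Z"
proof (rule groupI)
  fix p q assume "p \<in> carrier Z" "q \<in> carrier Z"
  then show "p \<otimes>\<^bsub>Z\<^esub> q \<in> carrier Z"
    by (cases p, cases q) (simp only: Z0_mem Z0_mult Z0_mult_closed)
next
  show "\<one>\<^bsub>Z\<^esub> \<in> carrier Z"
    by (simp add: Z0_one Z0_mem Z0P_def act_1)
next
  fix p q r assume a: "p \<in> carrier Z" "q \<in> carrier Z" "r \<in> carrier Z"
  obtain x \<xi> where p: "p = (x, \<xi>)" by (cases p)
  obtain y \<eta> where q: "q = (y, \<eta>)" by (cases q)
  obtain z \<zeta> where r: "r = (z, \<zeta>)" by (cases r)
  have A: "Z0P G1 G0 d act x \<xi>" "Z0P G1 G0 d act y \<eta>" "Z0P G1 G0 d act z \<zeta>"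
    using a p q r Z0_mem by auto
  have xyz: "x \<in> carrier G0" "y \<in> carrier G0" "z \<in> carrier G0" using A Z0P_x by blast+
  have f: "(\<lambda>t\<in>carrier G0. act (x \<otimes>\<^bsub>G0\<^esub> y) (\<zeta> t) \<otimes>\<^bsub>G1\<^esub>
          (\<lambda>t\<in>carrier G0. act x (\<eta> t) \<otimes>\<^bsub>G1\<^esub> \<xi> t) t) =
        (\<lambda>t\<in>carrier G0. act x ((\<lambda>t\<in>carrier G0. act y (\<zeta> t) \<otimes>\<^bsub>G1\<^esub> \<eta> t) t) \<otimes>\<^bsub>G1\<^esub> \<xi> t)"
  proof
    fix t show "(\<lambda>t\<in>carrier G0. act (x \<otimes>\<^bsub>G0\<^esub> y) (\<zeta> t) \<otimes>\<^bsub>G1\<^esub>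
          (\<lambda>t\<in>carrier G0. act x (\<eta> t) \<otimes>\<^bsub>G1\<^esub> \<xi> t) t) t =
        (\<lambda>t\<in>carrier G0. act x ((\<lambda>t\<in>carrier G0. act y (\<zeta> t) \<otimes>\<^bsub>G1\<^esub> \<eta> t) t) \<otimes>\<^bsub>G1\<^esub> \<xi> t) t"
    proof (cases "t \<in> carrier G0")
      case True
      then have "\<xi> t \<in> carrier G1" "\<eta> t \<in> carrier G1" "\<zeta> t \<in> carrier G1"
        using A Z0P_val by blast+
      then show ?thesis using True xyz by (simp add: act_m act_mult G1.m_assoc)
    qed simp
  qed
  show "p \<otimes>\<^bsub>Z\<^esub> q \<otimes>\<^bsub>Z\<^esub> r = p \<otimes>\<^bsub>Z\<^esub> (q \<otimes>\<^bsub>Z\<^esub> r)"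
    unfolding p q r Z0_mult using f xyz by (simp add: G0.m_assoc)
next
  fix p assume a: "p \<in> carrier Z"
  obtain x \<xi> where p: "p = (x, \<xi>)" by (cases p)
  have A: "Z0P G1 G0 d act x \<xi>" using a p Z0_mem by auto
  have x: "x \<in> carrier G0" using A Z0P_x by blast
  have f: "(\<lambda>t\<in>carrier G0. act \<one>\<^bsub>G0\<^esub> (\<xi> t) \<otimes>\<^bsub>G1\<^esub> (\<lambda>t\<in>carrier G0. \<one>\<^bsub>G1\<^esub>) t) = \<xi>"
  proof
    fix t show "(\<lambda>t\<in>carrier G0. act \<one>\<^bsub>G0\<^esub> (\<xi> t) \<otimes>\<^bsub>G1\<^esub> (\<lambda>t\<in>carrier G0. \<one>\<^bsub>G1\<^esub>) t) t = \<xi> t"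
    proof (cases "t \<in> carrier G0")
      case True
      then have "\<xi> t \<in> carrier G1" using A Z0P_val by blast
      then show ?thesis using True by (simp add: act_1)
    next
      case False then show ?thesis using Z0P_ext[OF A False] by simp
    qed
  qed
  show "\<one>\<^bsub>Z\<^esub> \<otimes>\<^bsub>Z\<^esub> p = p"
    unfolding p Z0_one Z0_mult using f x by simp
next
  fix p assume a: "p \<in> carrier Z"
  obtain x \<xi> where p: "p = (x, \<xi>)" by (cases p)
  have A: "Z0P G1 G0 d act x \<xi>" using a p Z0_mem by auto
  have x: "x \<in> carrier G0" using A Z0P_x by blast
  let ?q = "(inv\<^bsub>G0\<^esub> x, \<lambda>t\<in>carrier G0. act (inv\<^bsub>G0\<^esub> x) (inv\<^bsub>G1\<^esub> (\<xi> t)))"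
  have "?q \<in> carrier Z" using Z0_inv_closed[OF A] Z0_mem by simp
  moreover
  have f: "(\<lambda>t\<in>carrier G0. act (inv\<^bsub>G0\<^esub> x) (\<xi> t) \<otimes>\<^bsub>G1\<^esub>
       (\<lambda>t\<in>carrier G0. act (inv\<^bsub>G0\<^esub> x) (inv\<^bsub>G1\<^esub> (\<xi> t))) t) = (\<lambda>t\<in>carrier G0. \<one>\<^bsub>G1\<^esub>)"
  proof
    fix t show "(\<lambda>t\<in>carrier G0. act (inv\<^bsub>G0\<^esub> x) (\<xi> t) \<otimes>\<^bsub>G1\<^esub>
       (\<lambda>t\<in>carrier G0. act (inv\<^bsub>G0\<^esub> x) (inv\<^bsub>G1\<^esub> (\<xi> t))) t) t = (\<lambda>t\<in>carrier G0. \<one>\<^bsub>G1\<^esub>) t"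
    proof (cases "t \<in> carrier G0")
      case True
      then have xt: "\<xi> t \<in> carrier G1" using A Z0P_val by blast
      have "act (inv\<^bsub>G0\<^esub> x) (\<xi> t) \<otimes>\<^bsub>G1\<^esub> act (inv\<^bsub>G0\<^esub> x) (inv\<^bsub>G1\<^esub> (\<xi> t))
          = act (inv\<^bsub>G0\<^esub> x) (\<xi> t \<otimes>\<^bsub>G1\<^esub> inv\<^bsub>G1\<^esub> (\<xi> t))"
        by (rule act_mult[symmetric]) (use xt x in simp_all)
      also have "\<dots> = \<one>\<^bsub>G1\<^esub>" using xt x by simp
      finally show ?thesis using True by simp
    qed simp
  qed
  have "?q \<otimes>\<^bsub>Z\<^esub> p = \<one>\<^bsub>Z\<^esub>"
    unfolding p Z0_mult Z0_one using f x by simp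
  ultimately show "\<exists>q\<in>carrier Z. q \<otimes>\<^bsub>Z\<^esub> p = \<one>\<^bsub>Z\<^esub>" by blast
qed


abbreviation "D \<equiv> Der G1 G0 d act"

lemma I_sub: "subgroup I G0" using I_normal normal_imp_subgroup by blast

lemma Der_da: assumes "\<phi> \<in> carrier D" "a \<in> carrier G1"
  shows "\<phi> (r_coset G0 I (d a)) = \<one>\<^bsub>G1\<^esub>"
proof -
  have e: "r_coset G0 I (d a) = r_coset G0 I \<one>\<^bsub>G0\<^esub>"
    using G0.coset_join2[OF _ I_sub] assms(2) G0.coset_mult_one[OF subgroup.subset[OF I_sub]] by simp
  have "\<phi> (r_coset G0 I \<one>\<^bsub>G0\<^esub>) = \<phi> (r_coset G0 I \<one>\<^bsub>G0\<^esub>) \<otimes>\<^bsub>G1\<^esub> \<phi> (r_coset G0 I \<one>\<^bsub>G0\<^esub>)"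
    using Der_cross[OF assms(1), of "\<one>\<^bsub>G0\<^esub>" "\<one>\<^bsub>G0\<^esub>"] Der_vals[OF assms(1), of "\<one>\<^bsub>G0\<^esub>"]
    by (simp add: act_1)
  then show ?thesis unfolding e using Der_vals[OF assms(1), of "\<one>\<^bsub>G0\<^esub>"] by simp
qed

lemma der_to_Z0_eq: "der_to_Z0 G1 G0 d \<phi> = (\<one>\<^bsub>G0\<^esub>, \<lambda>t\<in>carrier G0. \<phi> (r_coset G0 I t))"
  by (simp add: der_to_Z0_def)

lemma der_to_Z0_mem: assumes "\<phi> \<in> carrier D" shows "der_to_Z0 G1 G0 d \<phi> \<in> carrier Z"
  unfolding der_to_Z0_eq Z0_mem Z0P_def
  using assms Der_vals[OF assms] KD Der_da[OF assms] Der_cross[OF assms]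
  by (auto simp: act_1 Pi_iff)

lemma hom1: "der_to_Z0 G1 G0 d \<in> hom D Z"
proof (rule homI)
  fix \<phi> assume "\<phi> \<in> carrier D" then show "der_to_Z0 G1 G0 d \<phi> \<in> carrier Z" by (rule der_to_Z0_mem)
next
  fix \<phi> \<psi> assume a: "\<phi> \<in> carrier D" "\<psi> \<in> carrier D"
  show "der_to_Z0 G1 G0 d (\<phi> \<otimes>\<^bsub>D\<^esub> \<psi>) = der_to_Z0 G1 G0 d \<phi> \<otimes>\<^bsub>Z\<^esub> der_to_Z0 G1 G0 d \<psi>"
    unfolding der_to_Z0_eq Z0_mult Der_mult
    using Der_vals[OF a(1)] Der_vals[OF a(2)] central
    by (auto simp: fun_eq_iff act_1)
qed

lemma hom2: "z0 \<in> hom Z G0"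
proof (rule homI)
  fix p assume "p \<in> carrier Z" then show "z0 p \<in> carrier G0"
    by (cases p) (simp add: Z0_mem Z0P_def z0_def)
next
  fix p q assume "p \<in> carrier Z" "q \<in> carrier Z"
  then show "z0 (p \<otimes>\<^bsub>Z\<^esub> q) = z0 p \<otimes>\<^bsub>G0\<^esub> z0 q"
    by (cases p, cases q) (simp add: Z0_mult z0_def)
qed

lemma inj1: "inj_on (der_to_Z0 G1 G0 d) (carrier D)"
proof (rule inj_onI)
  fix \<phi> \<psi> assume a: "\<phi> \<in> carrier D" "\<psi> \<in> carrier D" and e: "der_to_Z0 G1 G0 d \<phi> = der_to_Z0 G1 G0 d \<psi>"
  have e2: "(\<lambda>t\<in>carrier G0. \<phi> (r_coset G0 I t)) = (\<lambda>t\<in>carrier G0. \<psi> (r_coset G0 I t))"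
    using e unfolding der_to_Z0_eq by simp
  have v: "\<phi> (r_coset G0 I t) = \<psi> (r_coset G0 I t)" if "t \<in> carrier G0" for t
    using fun_cong[OF e2, of t] that by simp
  show "\<phi> = \<psi>"
  proof
    fix p show "\<phi> p = \<psi> p"
    proof (cases "p \<in> carrier P")
      case True then obtain s where "s \<in> carrier G0" "p = r_coset G0 I s" by (rule P_cases)
      then show ?thesis using v by simp
    next
      case False then show ?thesis using Der_ext[OF a(1) False] Der_ext[OF a(2) False] by simp
    qed
  qed
qed

lemma image1: "der_to_Z0 G1 G0 d ` carrier D = kernel Z G0 z0"
proof
  show "der_to_Z0 G1 G0 d ` carrier D \<subseteq> kernel Z G0 z0"
  proof
    fix p assume "p \<in> der_to_Z0 G1 G0 d ` carrier D"
    then obtain \<phi> where ph: "\<phi> \<in> carrier D" "p = der_to_Z0 G1 G0 d \<phi>" by blast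
    have "p \<in> carrier Z" using der_to_Z0_mem ph by simp
    moreover have "z0 p = \<one>\<^bsub>G0\<^esub>" using ph by (simp add: der_to_Z0_eq z0_def)
    ultimately show "p \<in> kernel Z G0 z0" by (simp add: kernel_def)
  qed
next
  show "kernel Z G0 z0 \<subseteq> der_to_Z0 G1 G0 d ` carrier D"
  proof
    fix p assume p: "p \<in> kernel Z G0 z0"
    obtain x \<xi> where pp: "p = (x, \<xi>)" by (cases p)
    have pZ: "p \<in> carrier Z" and x: "x = \<one>\<^bsub>G0\<^esub>"
      using p pp unfolding kernel_def z0_def by auto
    have A: "Z0P G1 G0 d act \<one>\<^bsub>G0\<^esub> \<xi>" using pZ pp x Z0_mem by simp
    have xic: "t \<in> carrier G0 \<Longrightarrow> \<xi> t \<in> carrier G1" for t using A Z0P_val by blast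
    have Z1: "t \<in> carrier G0 \<Longrightarrow> d (\<xi> t) = \<one>\<^bsub>G0\<^esub> \<otimes>\<^bsub>G0\<^esub> t \<otimes>\<^bsub>G0\<^esub> inv\<^bsub>G0\<^esub> \<one>\<^bsub>G0\<^esub> \<otimes>\<^bsub>G0\<^esub> inv\<^bsub>G0\<^esub> t" for t
      using A unfolding Z0P_def by blast
    have xiK: "\<xi> t \<in> K" if t: "t \<in> carrier G0" for t
    proof -
      have "d (\<xi> t) = \<one>\<^bsub>G0\<^esub>" using Z1[OF t] t by simp
      then show ?thesis using xic[OF t] unfolding kernel_def by simp
    qed
    have Z2': "a \<in> carrier G1 \<Longrightarrow> \<xi> (d a) = act \<one>\<^bsub>G0\<^esub> a \<otimes>\<^bsub>G1\<^esub> inv\<^bsub>G1\<^esub> a" for a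
      using A unfolding Z0P_def by blast
    have Z2: "a \<in> carrier G1 \<Longrightarrow> \<xi> (d a) = \<one>\<^bsub>G1\<^esub>" for a using Z2'[of a] by (simp add: act_1)
    have Z3: "s \<in> carrier G0 \<Longrightarrow> t \<in> carrier G0 \<Longrightarrow> \<xi> (s \<otimes>\<^bsub>G0\<^esub> t) = \<xi> s \<otimes>\<^bsub>G1\<^esub> act s (\<xi> t)"
      for s t using A unfolding Z0P_def by blast
    define \<phi> where "\<phi> = (\<lambda>q\<in>carrier P. \<xi> (SOME y. y \<in> q))"
    have phi: "\<phi> (r_coset G0 I t) = \<xi> t" if t: "t \<in> carrier G0" for t
    proof -
      have "t \<in> r_coset G0 I t" using G0.rcos_self[OF t I_sub] .
      then have "(SOME y. y \<in> r_coset G0 I t) \<in> r_coset G0 I t" by (rule someI)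
      then obtain a where a: "a \<in> carrier G1" "(SOME y. y \<in> r_coset G0 I t) = d a \<otimes>\<^bsub>G0\<^esub> t"
        unfolding r_coset_def by auto
      have "\<xi> (d a \<otimes>\<^bsub>G0\<^esub> t) = \<xi> (d a) \<otimes>\<^bsub>G1\<^esub> act (d a) (\<xi> t)"
        using Z3[of "d a" t] a t by simp
      also have "\<dots> = \<xi> t" using Z2[OF a(1)] act_dK[OF a(1) xiK[OF t]] xic[OF t] by simp
      finally have "\<xi> (d a \<otimes>\<^bsub>G0\<^esub> t) = \<xi> t" .
      then show ?thesis using a t by (simp add: \<phi>_def)
    qed
    have "\<phi> \<in> carrier D"
      unfolding Der_mem
    proof (intro conjI ballI)
      show "\<phi> \<in> carrier P \<rightarrow> K"
      proof
        fix q assume "q \<in> carrier P"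
        then obtain s where "s \<in> carrier G0" "q = r_coset G0 I s" by (rule P_cases)
        then show "\<phi> q \<in> K" using phi xiK by simp
      qed
      show "\<phi> \<in> extensional (carrier P)" by (simp add: \<phi>_def)
      fix s t assume st: "s \<in> carrier G0" "t \<in> carrier G0"
      then show "\<phi> (r_coset G0 I (s \<otimes>\<^bsub>G0\<^esub> t)) = \<phi> (r_coset G0 I s) \<otimes>\<^bsub>G1\<^esub> act s (\<phi> (r_coset G0 I t))"
        using phi[of s] phi[of t] phi[of "s \<otimes>\<^bsub>G0\<^esub> t"] Z3[OF st] by simp
    qed
    moreover have "der_to_Z0 G1 G0 d \<phi> = p"
    proof -
      have "(\<lambda>t\<in>carrier G0. \<phi> (r_coset G0 I t)) = \<xi>"
      proof
        fix t show "(\<lambda>t\<in>carrier G0. \<phi> (r_coset G0 I t)) t = \<xi> t"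
        proof (cases "t \<in> carrier G0")
          case True then show ?thesis using phi by simp
        next
          case False then show ?thesis using Z0P_ext[OF A False] by simp
        qed
      qed
      then show ?thesis unfolding der_to_Z0_eq pp x by simp
    qed
    ultimately show "p \<in> der_to_Z0 G1 G0 d ` carrier D" by blast
  qed
qed

end

theorem lemma3p5:
  fixes G1 :: "'a monoid" and G0 :: "'b monoid"
    and d :: "'a \<Rightarrow> 'b" and act :: "'b \<Rightarrow> 'a \<Rightarrow> 'a"
  assumes "crossed_module G1 G0 d act"
  shows "group (Der G1 G0 d act) \<and> group (Z0 G1 G0 d act) \<and>
         der_to_Z0 G1 G0 d \<in> hom (Der G1 G0 d act) (Z0 G1 G0 d act) \<and>
         z0 \<in> hom (Z0 G1 G0 d act) G0 \<and>
         inj_on (der_to_Z0 G1 G0 d) (carrier (Der G1 G0 d act)) \<and>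
         der_to_Z0 G1 G0 d ` carrier (Der G1 G0 d act) = kernel (Z0 G1 G0 d act) G0 z0"
proof -
  interpret cm G1 G0 d act using cm_intro[OF assms] .
  show ?thesis using Der_group Z0_group hom1 hom2 inj1 image1 by blast
qed

end
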